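(* Let $(X,Y,E)$ be a bipartite graph in which every vertex has degree at most $d_{max}$. For non-negative integers $k\le|X|$ and $l\le|Y|$ let $s=\frac{kl|E|}{|X||Y|}$. Then for every real $0\le\gamma<1/2$, $$\Pr_{S\sim\binom{X}{k},\,T\sim\binom{Y}{l}}\big[|E(S,T)|\notin[(1-\gamma)s,(1+\gamma)s]\big]\le4\exp\left(-\frac{\gamma^2s}{54d_{max}}\right).$$
   Context: $S$ and $T$ are sampled independently and uniformly among subsets of $X$ of size $k$ and subsets of $Y$ of size $l$, respectively. $E(S,T)$ denotes the set of edges with one endpoint in $S$ and the other in $T$. *)

theory Defs
  imports "HOL-Probability.Probability"
begin

definition edges_between :: "('a \<times> 'b) set \<Rightarrow> 'a set \<Rightarrow> 'b set \<Rightarrow> ('a \<times> 'b) set" where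
  "edges_between E S T = E \<inter> (S \<times> T)"

definition uniform_subset :: "'a set \<Rightarrow> nat \<Rightarrow> 'a set pmf" where
  "uniform_subset A k = pmf_of_set {S. S \<subseteq> A \<and> card S = k}"

end

theory Submission
  imports Defs
begin

lemma subs_insert:
  assumes "finite B" "x \<notin> B"
  shows "{S. S \<subseteq> insert x B \<and> card S = Suc k} =
    {S. S \<subseteq> B \<and> card S = Suc k} \<union> insert x ` {S. S \<subseteq> B \<and> card S = k}"
proof (intro equalityI subsetI)
  fix S assume S: "S \<in> {S. S \<subseteq> insert x B \<and> card S = Suc k}"
  show "S \<in> {S. S \<subseteq> B \<and> card S = Suc k} \<union> insert x ` {S. S \<subseteq> B \<and> card S = k}"
  proof (cases "x \<in> S")
    case True
    have fin: "finite S" using S assms finite_subset by auto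
    have "S = insert x (S - {x})" using True by auto
    moreover have "S - {x} \<subseteq> B" "card (S - {x}) = k" using S True fin by auto
    ultimately show ?thesis by blast
  next
    case False then show ?thesis using S by auto
  qed
next
  fix S assume "S \<in> {S. S \<subseteq> B \<and> card S = Suc k} \<union> insert x ` {S. S \<subseteq> B \<and> card S = k}"
  then show "S \<in> {S. S \<subseteq> insert x B \<and> card S = Suc k}"
    using assms by (auto, metis card_insert_disjoint finite_subset subsetD)
qed

lemma esum_insert:
  fixes a :: "'a \<Rightarrow> real"
  assumes "finite B" "x \<notin> B"
  shows "(\<Sum>S\<in>{S. S \<subseteq> insert x B \<and> card S = Suc k}. \<Prod>i\<in>S. a i) =
    (\<Sum>S\<in>{S. S \<subseteq> B \<and> card S = Suc k}. \<Prod>i\<in>S. a i) + a x * (\<Sum>S\<in>{S. S \<subseteq> B \<and> card S = k}. \<Prod>i\<in>S. a i)"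
proof -
  have fin1: "finite {S. S \<subseteq> B \<and> card S = Suc k}" "finite {S. S \<subseteq> B \<and> card S = k}"
    using assms by auto
  have disj: "{S. S \<subseteq> B \<and> card S = Suc k} \<inter> insert x ` {S. S \<subseteq> B \<and> card S = k} = {}"
    using assms by auto
  have inj: "inj_on (insert x) {S. S \<subseteq> B \<and> card S = k}"
    using assms by (auto simp: inj_on_def)
  have "(\<Sum>S\<in>insert x ` {S. S \<subseteq> B \<and> card S = k}. \<Prod>i\<in>S. a i) =
      (\<Sum>S\<in>{S. S \<subseteq> B \<and> card S = k}. \<Prod>i\<in>insert x S. a i)"
    by (subst sum.reindex[OF inj]) simp
  also have "\<dots> = (\<Sum>S\<in>{S. S \<subseteq> B \<and> card S = k}. a x * (\<Prod>i\<in>S. a i))"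
    using assms by (intro sum.cong refl) (auto intro!: prod.insert intro: finite_subset)
  finally show ?thesis
    using assms fin1 disj by (simp add: subs_insert sum.union_disjoint sum_distrib_left)
qed

lemma bern_pow:
  fixes y m :: real
  assumes "0 \<le> y" "0 \<le> m"
  shows "m ^ Suc k + real (Suc k) * m ^ k * (y - m) \<le> y ^ Suc k"
proof (induction k)
  case 0 then show ?case by simp
next
  case (Suc k)
  have "y * (m ^ Suc k + real (Suc k) * m ^ k * (y - m)) \<le> y * y ^ Suc k"
    using Suc assms by (intro mult_left_mono) auto
  moreover have "m ^ Suc (Suc k) + real (Suc (Suc k)) * m ^ Suc k * (y - m)
      = y * (m ^ Suc k + real (Suc k) * m ^ k * (y - m)) - real (Suc k) * m ^ k * (y - m)^2"
    by (simp add: algebra_simps power2_eq_square)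
  moreover have "0 \<le> real (Suc k) * m ^ k * (y - m)^2" using assms by simp
  ultimately show ?case by simp
qed

lemma maclaurin:
  fixes a :: "'a \<Rightarrow> real"
  assumes "finite A" "\<forall>i\<in>A. 0 \<le> a i"
  shows "k \<le> card A \<Longrightarrow> (\<Sum>S\<in>{S. S \<subseteq> A \<and> card S = k}. \<Prod>i\<in>S. a i)
     \<le> real (card A choose k) * (sum a A / real (card A)) ^ k"
  using assms
proof (induction A arbitrary: k rule: finite_induct)
  case empty
  then have k0: "k = 0" by simp
  have e: "{S. S \<subseteq> {} \<and> card S = k} = {{}}" using k0 by auto
  show ?case unfolding e using k0 by simp
next
  case (insert x B)
  define m where "m = card B"
  define mB where "mB = sum a B / real m"
  have nonneg: "\<forall>i\<in>B. 0 \<le> a i" "0 \<le> a x" using insert by auto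
  have mB0: "0 \<le> mB" unfolding mB_def using nonneg by (simp add: sum_nonneg)
  have sumB: "sum a B = real m * mB"
    unfolding mB_def m_def using insert(1) by (cases "card B = 0") auto
  have cardI: "card (insert x B) = Suc m" using insert m_def by simp
  show ?case
  proof (cases k)
    case 0
    then have "{S. S \<subseteq> insert x B \<and> card S = k} = {{}}" using insert(1)
      by (auto dest: finite_subset)
    then show ?thesis using 0 by simp
  next
    case (Suc j)
    have jm: "j \<le> m" using insert Suc cardI by simp
    have IH1: "(\<Sum>S\<in>{S. S \<subseteq> B \<and> card S = j}. \<Prod>i\<in>S. a i) \<le> real (m choose j) * mB ^ j"
      using insert.IH[of j] jm nonneg unfolding m_def mB_def by simp
    have IH2: "(\<Sum>S\<in>{S. S \<subseteq> B \<and> card S = Suc j}. \<Prod>i\<in>S. a i) \<le> real (m choose Suc j) * mB ^ Suc j"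
    proof (cases "Suc j \<le> m")
      case True then show ?thesis
        using insert.IH[of "Suc j"] nonneg unfolding m_def mB_def by simp
    next
      case False
      then have "{S. S \<subseteq> B \<and> card S = Suc j} = {}" using insert(1) m_def
        by (auto dest: card_mono)
      then show ?thesis using False by (simp only: sum.empty) (simp add: binomial_eq_0)
    qed
    define c where "c = real (Suc m choose Suc j)"
    have c1: "real (m choose j) = c * real (Suc j) / real (Suc m)"
      proof -
      have "real (Suc m) * real (m choose j) = c * real (Suc j)"
        using arg_cong[OF Suc_times_binomial_eq[of m j], of real] unfolding c_def
        by (simp only: of_nat_mult)
      then show ?thesis by (simp add: eq_divide_eq mult.commute del: of_nat_Suc)
    qed
    have c2: "real (m choose Suc j) = c * (real m - real j) / real (Suc m)"
      proof -
      have "real (m choose Suc j) = c - real (m choose j)" unfolding c_def by simp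
      also have "\<dots> = c * (real (Suc m) - real (Suc j)) / real (Suc m)"
        unfolding c1 by (simp add: diff_divide_distrib right_diff_distrib del: of_nat_Suc)
      finally show ?thesis by simp
    qed
    define M where "M = sum a (insert x B) / real (card (insert x B))"
    have M: "M - mB = (a x - mB) / real (Suc m)"
      proof -
      have "M = (a x + real m * mB) / real (Suc m)" unfolding M_def cardI using insert(1,2) sumB by simp
      then show ?thesis by (simp add: divide_simps) (simp add: algebra_simps)
    qed
    have c0: "0 \<le> c" unfolding c_def by simp
    have M0: "0 \<le> M" unfolding M_def using insert by (simp add: sum_nonneg)
    have "(\<Sum>S\<in>{S. S \<subseteq> insert x B \<and> card S = k}. \<Prod>i\<in>S. a i)
        \<le> real (m choose Suc j) * mB ^ Suc j + a x * (real (m choose j) * mB ^ j)"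
      unfolding Suc using esum_insert[OF insert(1,2), where k=j and a=a] IH1 IH2 nonneg
      by (simp add: add_mono mult_left_mono)
    also have "\<dots> = c * (mB ^ Suc j + real (Suc j) * mB ^ j * (M - mB))"
      proof -
      have gen: "\<And>P r q::real. r \<noteq> 0 \<Longrightarrow> c*(r - q)/r*(mB*P) + a x*(c*q/r*P) = c*(mB*P + q*P*((a x - mB)/r))"
        by (simp add: field_simps)
      have "real m - real j = real (Suc m) - real (Suc j)" by simp
      then show ?thesis unfolding c1 c2 M using gen[of "real (Suc m)" "real (Suc j)" "mB^j"]
        by (simp only: power_Suc)
    qed
    also have "\<dots> \<le> c * M ^ Suc j"
      using bern_pow[OF M0 mB0, of j] c0 by (intro mult_left_mono) auto
    finally show ?thesis unfolding Suc c_def M_def cardI by simp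
  qed
qed

lemma exp_small:
  fixes u :: real
  assumes "\<bar>u\<bar> \<le> 1"
  shows "exp u \<le> 1 + u + u^2"
proof (cases "0 \<le> u")
  case True then show ?thesis using exp_bound[of u] assms by simp
next
  case False
  define v where "v = - u"
  have v0: "0 \<le> v" using False v_def by simp
  have le: "1 + v + v^2/2 \<le> exp v" using exp_lower_Taylor_quadratic[OF v0] .
  have pos: "0 < 1 + v + v^2/2" using v0 by (simp add: add_pos_nonneg)
  have "exp u = 1 / exp v" unfolding v_def by (simp add: exp_minus field_simps)
  also have "\<dots> \<le> 1 / (1 + v + v^2/2)" using le pos by (intro divide_left_mono) auto
  also have "\<dots> \<le> 1 - v + v^2"
  proof -
    have "1 \<le> (1 - v + v^2) * (1 + v + v^2/2)"
    proof -
      have "(1 - v + v^2) * (1 + v + v^2/2) = 1 + v^2/2 + v^3/2 + v^4/2"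
        by (simp add: field_simps power2_eq_square power3_eq_cube power4_eq_xxxx)
      moreover have "0 \<le> v^2/2 + v^3/2 + v^4/2" using v0 by simp
      ultimately show ?thesis by simp
    qed
    then show ?thesis using pos by (simp add: divide_le_eq)
  qed
  finally show ?thesis unfolding v_def by simp
qed

lemma count_le_exp:
  fixes f :: "'c \<Rightarrow> real"
  assumes "finite F" "0 \<le> t"
  shows "real (card {S\<in>F. a \<le> f S}) \<le> (\<Sum>S\<in>F. exp (t * (f S - a)))"
proof -
  have "real (card {S\<in>F. a \<le> f S}) = (\<Sum>S\<in>{S\<in>F. a \<le> f S}. 1)" by simp
  also have "\<dots> \<le> (\<Sum>S\<in>{S\<in>F. a \<le> f S}. exp (t * (f S - a)))"
    using assms by (intro sum_mono) (simp add: mult_nonneg_nonneg)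
  also have "\<dots> \<le> (\<Sum>S\<in>F. exp (t * (f S - a)))"
    using assms by (intro sum_mono2) auto
  finally show ?thesis .
qed

lemma mgf_bound:
  fixes w :: "'a \<Rightarrow> real"
  assumes "finite A" "\<forall>i\<in>A. 0 \<le> w i \<and> w i \<le> d" "0 < d" "k \<le> card A"
  shows "(\<Sum>S\<in>{S. S \<subseteq> A \<and> card S = k}. exp (t * sum w S))
     \<le> real (card A choose k) * exp (real k * sum w A / real (card A) * (exp (t*d) - 1) / d)"
proof -
  define a where "a = (\<lambda>i. exp (t * w i))"
  have "(\<Sum>S\<in>{S. S \<subseteq> A \<and> card S = k}. exp (t * sum w S))
      = (\<Sum>S\<in>{S. S \<subseteq> A \<and> card S = k}. \<Prod>i\<in>S. a i)"
    unfolding a_def using assms(1)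
    by (intro sum.cong refl) (auto simp: sum_distrib_left exp_sum dest: finite_subset)
  also have "\<dots> \<le> real (card A choose k) * (sum a A / real (card A)) ^ k"
    using maclaurin[OF assms(1), of a k] assms(4) unfolding a_def by simp
  also have "\<dots> \<le> real (card A choose k) * exp (real k * sum w A / real (card A) * (exp (t*d) - 1) / d)"
  proof (cases "k = 0")
    case True then show ?thesis by simp
  next
    case False
    then have n0: "0 < real (card A)" using assms(4) by simp
    define m where "m = sum w A / real (card A)"
    have conv: "a i \<le> 1 + w i / d * (exp (t*d) - 1)" if "i \<in> A" for i
    proof -
      have l0: "0 \<le> w i / d" "w i / d \<le> 1" using assms that by auto
      have "exp ((1 - w i / d) *\<^sub>R 0 + (w i / d) *\<^sub>R (t*d)) \<le> (1 - w i / d) * exp 0 + (w i / d) * exp (t*d)"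
        using convex_onD[OF exp_convex, of "w i / d" 0 "t*d"] l0 by simp
      moreover have "(1 - w i / d) *\<^sub>R 0 + (w i / d) *\<^sub>R (t*d) = t * w i" using assms(3) by simp
      ultimately show ?thesis unfolding a_def by (simp add: algebra_simps)
    qed
    have "sum a A / real (card A) \<le> (\<Sum>i\<in>A. 1 + w i / d * (exp (t*d) - 1)) / real (card A)"
      using conv n0 by (intro divide_right_mono sum_mono) auto
    also have "\<dots> = 1 + m * (exp (t*d) - 1) / d"
    proof -
      have "(\<Sum>i\<in>A. 1 + w i / d * (exp (t*d) - 1)) = real (card A) + (\<Sum>i\<in>A. w i / d) * (exp (t*d) - 1)"
        by (simp add: sum.distrib sum_distrib_right)
      also have "\<dots> = real (card A) + sum w A / d * (exp (t*d) - 1)"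
        by (simp add: sum_divide_distrib[symmetric])
      finally show ?thesis unfolding m_def using n0 assms(3) by (simp add: field_simps)
    qed
    also have "\<dots> \<le> exp (m * (exp (t*d) - 1) / d)" by (rule exp_ge_add_one_self)
    finally have b: "sum a A / real (card A) \<le> exp (m * (exp (t*d) - 1) / d)" .
    have b0: "0 \<le> sum a A / real (card A)" unfolding a_def by (simp add: sum_nonneg)
    have "(sum a A / real (card A)) ^ k \<le> exp (m * (exp (t*d) - 1) / d) ^ k"
      by (rule power_mono[OF b b0])
    also have "\<dots> = exp (real k * sum w A / real (card A) * (exp (t*d) - 1) / d)"
      unfolding m_def exp_of_nat_mult[symmetric] by (simp add: algebra_simps)
    finally show ?thesis by (intro mult_left_mono) auto
  qed
  finally show ?thesis .
qed

lemma exp_lin: "exp (t * (x - c)) = exp (-(t*c)) * exp (t*x)"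
  "exp (t * (- x - - c)) = exp (t*c) * exp ((-t)*x)" for t x c :: real
proof -
  have "t * (x - c) = -(t*c) + t*x" "t * (- x - - c) = t*c + (-t)*x" by (simp_all add: algebra_simps)
  then show "exp (t * (x - c)) = exp (-(t*c)) * exp (t*x)"
    "exp (t * (- x - - c)) = exp (t*c) * exp ((-t)*x)" by (simp_all only: exp_add)
qed

lemma chernoff_count:
  fixes w :: "'a \<Rightarrow> real"
  assumes A: "finite A" and w: "\<forall>i\<in>A. 0 \<le> w i \<and> w i \<le> d" and d: "0 < d"
    and dl: "0 \<le> \<delta>" "\<delta> \<le> 1" and k: "k \<le> card A"
    and mu: "\<mu> = real k * sum w A / real (card A)"
  shows "real (card {S\<in>{S. S \<subseteq> A \<and> card S = k}. sum w S \<notin> {(1-\<delta>)*\<mu>..(1+\<delta>)*\<mu>}})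
     \<le> real (card A choose k) * (2 * exp (-(\<delta>^2*\<mu>/(4*d))))"
proof -
  define F where "F = {S. S \<subseteq> A \<and> card S = k}"
  define C where "C = real (card A choose k)"
  have finF: "finite F" unfolding F_def using A by auto
  have mu0: "0 \<le> \<mu>" unfolding mu using w by (simp add: sum_nonneg)
  have C0: "0 \<le> C" unfolding C_def by simp
  define t where "t = \<delta> / (2*d)"
  have t0: "0 \<le> t" unfolding t_def using dl d by simp
  have td: "t * d = \<delta>/2" unfolding t_def using d by simp
  have mgf: "(\<Sum>S\<in>F. exp (u * sum w S)) \<le> C * exp (\<mu> * (exp (u*d) - 1) / d)" for u
    using mgf_bound[OF A w d k, of u] unfolding F_def C_def mu by simp
  have up: "real (card {S\<in>F. (1+\<delta>)*\<mu> \<le> sum w S}) \<le> C * exp (-(\<delta>^2*\<mu>/(4*d)))"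
  proof -
    have "real (card {S\<in>F. (1+\<delta>)*\<mu> \<le> sum w S}) \<le> (\<Sum>S\<in>F. exp (t * (sum w S - (1+\<delta>)*\<mu>)))"
      by (rule count_le_exp[OF finF t0])
    also have "\<dots> = exp (-(t*((1+\<delta>)*\<mu>))) * (\<Sum>S\<in>F. exp (t * sum w S))"
      by (subst sum_distrib_left) (intro sum.cong refl, rule exp_lin)
    also have "\<dots> \<le> exp (-(t*((1+\<delta>)*\<mu>))) * (C * exp (\<mu> * (exp (\<delta>/2) - 1) / d))"
      using mgf[of t] td by (intro mult_left_mono) auto
    also have "\<dots> = C * exp (-(t*((1+\<delta>)*\<mu>)) + \<mu> * (exp (\<delta>/2) - 1) / d)"
      unfolding exp_add by (rule mult.left_commute)
    also have "\<dots> \<le> C * exp (-(\<delta>^2*\<mu>/(4*d)))"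
    proof -
      have e: "exp (\<delta>/2) - 1 \<le> \<delta>/2 + (\<delta>/2)^2" using exp_small[of "\<delta>/2"] dl by simp
      have "\<mu> * (exp (\<delta>/2) - 1) / d \<le> \<mu> * (\<delta>/2 + (\<delta>/2)^2) / d"
        using e mu0 d by (intro divide_right_mono mult_left_mono) auto
      moreover have "-(t*((1+\<delta>)*\<mu>)) + \<mu> * (\<delta>/2 + (\<delta>/2)^2) / d = -(\<delta>^2*\<mu>/(4*d))"
        unfolding t_def using d by (simp add: field_simps power2_eq_square)
      ultimately have "-(t*((1+\<delta>)*\<mu>)) + \<mu> * (exp (\<delta>/2) - 1) / d \<le> -(\<delta>^2*\<mu>/(4*d))" by linarith
      then show ?thesis using C0 by (intro mult_left_mono) auto
    qed
    finally show ?thesis .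
  qed
  have low: "real (card {S\<in>F. -((1-\<delta>)*\<mu>) \<le> - sum w S}) \<le> C * exp (-(\<delta>^2*\<mu>/(4*d)))"
  proof -
    have "real (card {S\<in>F. -((1-\<delta>)*\<mu>) \<le> - sum w S}) \<le> (\<Sum>S\<in>F. exp (t * (- sum w S - -((1-\<delta>)*\<mu>))))"
      by (rule count_le_exp[OF finF t0])
    also have "\<dots> = exp (t*((1-\<delta>)*\<mu>)) * (\<Sum>S\<in>F. exp ((-t) * sum w S))"
      by (subst sum_distrib_left) (intro sum.cong refl, rule exp_lin)
    also have "\<dots> \<le> exp (t*((1-\<delta>)*\<mu>)) * (C * exp (\<mu> * (exp (-(\<delta>/2)) - 1) / d))"
      using mgf[of "-t"] td by (intro mult_left_mono) auto
    also have "\<dots> = C * exp (t*((1-\<delta>)*\<mu>) + \<mu> * (exp (-(\<delta>/2)) - 1) / d)"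
      unfolding exp_add by (rule mult.left_commute)
    also have "\<dots> \<le> C * exp (-(\<delta>^2*\<mu>/(4*d)))"
    proof -
      have e: "exp (-(\<delta>/2)) - 1 \<le> -(\<delta>/2) + (\<delta>/2)^2" using exp_small[of "-(\<delta>/2)"] dl by simp
      have "\<mu> * (exp (-(\<delta>/2)) - 1) / d \<le> \<mu> * (-(\<delta>/2) + (\<delta>/2)^2) / d"
        using e mu0 d by (intro divide_right_mono mult_left_mono) auto
      moreover have "t*((1-\<delta>)*\<mu>) + \<mu> * (-(\<delta>/2) + (\<delta>/2)^2) / d = -(\<delta>^2*\<mu>/(4*d))"
        unfolding t_def using d by (simp add: field_simps power2_eq_square)
      ultimately have "t*((1-\<delta>)*\<mu>) + \<mu> * (exp (-(\<delta>/2)) - 1) / d \<le> -(\<delta>^2*\<mu>/(4*d))" by linarith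
      then show ?thesis using C0 by (intro mult_left_mono) auto
    qed
    finally show ?thesis .
  qed
  have sub: "{S\<in>F. sum w S \<notin> {(1-\<delta>)*\<mu>..(1+\<delta>)*\<mu>}} \<subseteq>
      {S\<in>F. (1+\<delta>)*\<mu> \<le> sum w S} \<union> {S\<in>F. -((1-\<delta>)*\<mu>) \<le> - sum w S}" by auto
  have "real (card {S\<in>F. sum w S \<notin> {(1-\<delta>)*\<mu>..(1+\<delta>)*\<mu>}})
      \<le> real (card ({S\<in>F. (1+\<delta>)*\<mu> \<le> sum w S} \<union> {S\<in>F. -((1-\<delta>)*\<mu>) \<le> - sum w S}))"
    using finF by (intro of_nat_mono card_mono[OF _ sub]) auto
  also have "\<dots> \<le> real (card {S\<in>F. (1+\<delta>)*\<mu> \<le> sum w S}) + real (card {S\<in>F. -((1-\<delta>)*\<mu>) \<le> - sum w S})"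
    using card_Un_le[of "{S\<in>F. (1+\<delta>)*\<mu> \<le> sum w S}" "{S\<in>F. -((1-\<delta>)*\<mu>) \<le> - sum w S}"]
    by (simp only: of_nat_add[symmetric] of_nat_le_iff)
  also have "\<dots> \<le> C * (2 * exp (-(\<delta>^2*\<mu>/(4*d))))" using up low by simp
  finally show ?thesis unfolding F_def C_def .
qed

lemma card_E_row:
  assumes "finite S" "finite T"
  shows "card (E \<inter> S \<times> T) = (\<Sum>x\<in>S. card {y\<in>T. (x, y) \<in> E})"
proof -
  have "E \<inter> S \<times> T = (SIGMA x:S. {y\<in>T. (x, y) \<in> E})" by auto
  then show ?thesis using assms by simp
qed

lemma card_E_col:
  assumes "finite S" "finite T"
  shows "card (E \<inter> S \<times> T) = (\<Sum>y\<in>T. card {x\<in>S. (x, y) \<in> E})"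
proof -
  have "E \<inter> S \<times> T = (\<lambda>(y,x). (x,y)) ` (SIGMA y:T. {x\<in>S. (x, y) \<in> E})" by auto
  moreover have "inj_on (\<lambda>(y,x). (x,y)) (SIGMA y:T. {x\<in>S. (x, y) \<in> E})" by (auto simp: inj_on_def)
  ultimately show ?thesis using assms by (simp add: card_image)
qed

lemma pair_pmf_of_set:
  assumes "finite A" "A \<noteq> {}" "finite B" "B \<noteq> {}"
  shows "pair_pmf (pmf_of_set A) (pmf_of_set B) = pmf_of_set (A \<times> B)"
proof (rule pmf_eqI)
  fix z :: "'a \<times> 'b"
  obtain a b where z: "z = (a, b)" by (cases z)
  have AB: "A \<times> B \<noteq> {}" "finite (A \<times> B)" using assms by auto
  have "pmf (pair_pmf (pmf_of_set A) (pmf_of_set B)) z = indicator A a / card A * (indicator B b / card B)"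
    unfolding z pmf_pair using assms by simp
  also have "\<dots> = indicator (A \<times> B) z / card (A \<times> B)"
    unfolding z by (simp add: indicator_def card_cartesian_product)
  also have "\<dots> = pmf (pmf_of_set (A \<times> B)) z" using AB by simp
  finally show "pmf (pair_pmf (pmf_of_set A) (pmf_of_set B)) z = pmf (pmf_of_set (A \<times> B)) z" .
qed

lemma exp_cmp:
  fixes \<gamma> ss \<mu> d :: real
  assumes "0 < d" "2 * ss \<le> 3 * \<mu>"
  shows "exp (-((\<gamma>/3)^2* \<mu>/(4*d))) \<le> exp (- (\<gamma>^2 * ss / (54 * d)))"
proof -
  have "\<gamma>^2* (2 * ss) \<le> \<gamma>^2* (3* \<mu>)" using assms by (intro mult_left_mono) auto
  then have "\<gamma>^2* (2 * ss)/(108*d) \<le> \<gamma>^2* (3* \<mu>)/(108*d)" using assms by (intro divide_right_mono) auto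
  moreover have "\<gamma>^2* (2 * ss)/(108*d) = \<gamma>^2 * ss / (54 * d)" by simp
  moreover have "\<gamma>^2* (3* \<mu>)/(108*d) = (\<gamma>/3)^2* \<mu>/(4*d)" by (simp add: power_divide)
  ultimately show ?thesis by simp
qed

lemma sandwich:
  fixes \<delta> ss \<mu> z :: real
  assumes "0 \<le> \<delta>" "\<delta> \<le> 1/6" "0 \<le> ss" "(1-\<delta>) * ss \<le> \<mu>" "\<mu> \<le> (1+\<delta>) * ss"
    "(1-\<delta>) * \<mu> \<le> z" "z \<le> (1+\<delta>) * \<mu>"
  shows "(1 - 3*\<delta>) * ss \<le> z \<and> z \<le> (1 + 3*\<delta>) * ss"
proof
  have "(1-\<delta>) * ((1-\<delta>) * ss) \<le> (1-\<delta>) * \<mu>" using assms by (intro mult_left_mono) auto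
  moreover have "(1 - 3*\<delta>) * ss \<le> (1-\<delta>) * ((1-\<delta>) * ss)"
  proof -
    have "(1 - 3*\<delta>) \<le> (1-\<delta>) * (1-\<delta>)" using assms by (simp add: algebra_simps)
    then show ?thesis using assms(3) by (simp add: mult_right_mono mult.assoc[symmetric])
  qed
  ultimately show "(1 - 3*\<delta>) * ss \<le> z" using assms by linarith
next
  have "(1+\<delta>) * \<mu> \<le> (1+\<delta>) * ((1+\<delta>) * ss)" using assms by (intro mult_left_mono) auto
  moreover have "(1+\<delta>) * ((1+\<delta>) * ss) \<le> (1 + 3*\<delta>) * ss"
  proof -
    have "\<delta> * \<delta> \<le> \<delta>" using assms by (intro mult_left_le) auto
    then have "(1+\<delta>) * (1+\<delta>) \<le> (1 + 3*\<delta>)" by (simp add: algebra_simps)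
    then show ?thesis using assms(3) by (simp add: mult_right_mono mult.assoc[symmetric])
  qed
  ultimately show "z \<le> (1 + 3*\<delta>) * ss" using assms by linarith
qed

theorem lemma2p9:
  fixes X :: "'a set" and Y :: "'b set" and E :: "('a \<times> 'b) set"
    and dmax :: nat and k l :: nat and \<gamma> :: real
  assumes "finite X" and "finite Y" and "E \<subseteq> X \<times> Y"
    and "\<forall>x\<in>X. card {y. (x, y) \<in> E} \<le> dmax"
    and "\<forall>y\<in>Y. card {x. (x, y) \<in> E} \<le> dmax"
    and "k \<le> card X" and "l \<le> card Y"
    and "0 \<le> \<gamma>" and "\<gamma> < 1/2"
  shows "let s = real k * real l * real (card E) / (real (card X) * real (card Y)) in
    measure_pmf.prob (pair_pmf (uniform_subset X k) (uniform_subset Y l))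
      {(S, T). real (card (edges_between E S T)) \<notin> {(1 - \<gamma>) * s .. (1 + \<gamma>) * s}}
    \<le> 4 * exp (- (\<gamma>^2 * s / (54 * real dmax)))"
proof -
  note finX = assms(1) and finY = assms(2) and EXY = assms(3) and degX = assms(4) and degY = assms(5)
    and kX = assms(6) and lY = assms(7) and g0 = assms(8) and g1 = assms(9)
  define n where "n = card X"
  define m where "m = card Y"
  define s where "s = real k * real l * real (card E) / (real n * real m)"
  define SS where "SS = {S. S \<subseteq> X \<and> card S = k}"
  define TT where "TT = {T. T \<subseteq> Y \<and> card T = l}"
  define Bad where "Bad = {(S, T). real (card (edges_between E S T)) \<notin> {(1 - \<gamma>) * s .. (1 + \<gamma>) * s}}"
  define d where "d = real dmax"
  define \<epsilon> where "\<epsilon> = exp (- (\<gamma>^2 * s / (54 * d)))"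
  have finSS: "finite SS" unfolding SS_def using finX by auto
  have finTT: "finite TT" unfolding TT_def using finY by auto
  have cardSS: "card SS = n choose k" unfolding SS_def n_def using n_subsets[OF finX] .
  have cardTT: "card TT = m choose l" unfolding TT_def m_def using n_subsets[OF finY] .
  have SSne: "SS \<noteq> {}" using cardSS kX n_def by (auto simp: zero_less_binomial_iff)
  have TTne: "TT \<noteq> {}" using cardTT lY m_def by (auto simp: zero_less_binomial_iff)
  have prob: "measure_pmf.prob (pair_pmf (uniform_subset X k) (uniform_subset Y l)) Bad
      = real (card (SS \<times> TT \<inter> Bad)) / (real (card SS) * real (card TT))"
    unfolding uniform_subset_def SS_def[symmetric] TT_def[symmetric]
    using finSS finTT SSne TTne
    by (simp add: pair_pmf_of_set measure_pmf_of_set card_cartesian_product)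
  have main: "measure_pmf.prob (pair_pmf (uniform_subset X k) (uniform_subset Y l)) Bad \<le> 4 * \<epsilon>"
  proof (cases "dmax = 0")
    case True
    then have "4 * \<epsilon> = 4" unfolding \<epsilon>_def d_def by simp
    then show ?thesis using measure_pmf.prob_le_1 by (metis dual_order.trans one_le_numeral)
  next
    case False
    then have d0: "0 < d" unfolding d_def by simp
    define \<delta> where "\<delta> = \<gamma> / 3"
    have dl: "0 \<le> \<delta>" "\<delta> \<le> 1" "\<delta> \<le> 1/6" unfolding \<delta>_def using g0 g1 by auto
    have g3: "\<gamma> = 3 * \<delta>" unfolding \<delta>_def by simp
    define w1 where "w1 = (\<lambda>x. real (card {y. (x, y) \<in> E}))"
    have w1b: "\<forall>x\<in>X. 0 \<le> w1 x \<and> w1 x \<le> d" unfolding w1_def d_def using degX by auto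
    have rowY: "{y\<in>Y. (x, y) \<in> E} = {y. (x, y) \<in> E}" for x using EXY by auto
    have AS: "real (card (E \<inter> S \<times> Y)) = sum w1 S" if "S \<subseteq> X" for S
    proof -
      have "finite S" using that finX finite_subset by auto
      then show ?thesis unfolding w1_def using card_E_row[of S Y E] finY rowY by simp
    qed
    have EXY': "E \<inter> X \<times> Y = E" using EXY by auto
    define \<mu>A where "\<mu>A = real k * sum w1 X / real n"
    have \<mu>A: "\<mu>A = real k * real (card E) / real n" unfolding \<mu>A_def using AS[of X] EXY' by simp
    have \<mu>A0: "0 \<le> \<mu>A" unfolding \<mu>A by simp
    define c where "c = real l / real m"
    have c0: "0 \<le> c" "c \<le> 1" unfolding c_def using lY m_def by (auto simp: divide_le_eq_1)
    have sc: "s = c * \<mu>A" unfolding s_def \<mu>A c_def by (simp add: ac_simps)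
    have s0: "0 \<le> s" unfolding sc using c0 \<mu>A0 by simp
    have s\<mu>A: "s \<le> \<mu>A" unfolding sc using c0 \<mu>A0 by (simp add: mult_left_le_one_le)
    define G where "G = {S\<in>SS. sum w1 S \<in> {(1-\<delta>)*\<mu>A..(1+\<delta>)*\<mu>A}}"
    have SSG: "SS - G = {S\<in>{S. S \<subseteq> X \<and> card S = k}. sum w1 S \<notin> {(1-\<delta>)*\<mu>A..(1+\<delta>)*\<mu>A}}" unfolding G_def SS_def by auto
    have boundA: "real (card (SS - G)) \<le> real (card SS) * (2 * \<epsilon>)"
    proof -
      have "real (card (SS - G)) \<le> real (n choose k) * (2 * exp (-(\<delta>^2*\<mu>A/(4*d))))"
        using chernoff_count[OF finX w1b d0 dl(1,2) kX \<mu>A_def[unfolded n_def]]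
        by (simp only: SSG n_def)
      also have "\<dots> \<le> real (n choose k) * (2 * \<epsilon>)"
        unfolding \<epsilon>_def g3 using exp_cmp[OF d0, of s \<mu>A "3*\<delta>"] s\<mu>A \<mu>A0 by (simp add: mult_left_mono)
      finally show ?thesis using cardSS by simp
    qed
    define w2 where "w2 = (\<lambda>S y. real (card {x\<in>S. (x, y) \<in> E}))"
    define \<mu>Z where "\<mu>Z = (\<lambda>S. c * sum w1 S)"
    define BT where "BT = (\<lambda>S. {T\<in>TT. sum (w2 S) T \<notin> {(1-\<delta>)*\<mu>Z S..(1+\<delta>)*\<mu>Z S}})"
    have Zsum: "real (card (edges_between E S T)) = sum (w2 S) T" if "S \<subseteq> X" "T \<subseteq> Y" for S T
    proof -
      have "finite S" "finite T" using that finX finY finite_subset by auto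
      then show ?thesis unfolding w2_def edges_between_def using card_E_col[of S T E] by simp
    qed
    have boundT: "real (card (BT S)) \<le> real (card TT) * (2 * \<epsilon>)" if "S \<in> G" for S
    proof -
      have SX: "S \<subseteq> X" using that unfolding G_def SS_def by auto
      have w2b: "\<forall>y\<in>Y. 0 \<le> w2 S y \<and> w2 S y \<le> d"
      proof
        fix y assume y: "y \<in> Y"
        have "{x. (x, y) \<in> E} \<subseteq> X" using EXY by auto
        then have "finite {x. (x, y) \<in> E}" using finX finite_subset by auto
        then have "card {x\<in>S. (x, y) \<in> E} \<le> card {x. (x, y) \<in> E}" by (intro card_mono) auto
        then show "0 \<le> w2 S y \<and> w2 S y \<le> d" unfolding w2_def d_def using degY y by force
      qed
      have sw2: "sum (w2 S) Y = sum w1 S" using Zsum[OF SX order_refl] AS[OF SX]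
        unfolding edges_between_def by simp
      have mz: "\<mu>Z S = real l * sum (w2 S) Y / real m" unfolding \<mu>Z_def c_def sw2 by simp
      have inG: "(1-\<delta>)*\<mu>A \<le> sum w1 S" "sum w1 S \<le> (1+\<delta>)*\<mu>A" using that unfolding G_def by auto
      have "c * ((1-\<delta>)*\<mu>A) \<le> \<mu>Z S" unfolding \<mu>Z_def using inG c0 by (intro mult_left_mono) auto
      then have mzl: "(1-\<delta>) * s \<le> \<mu>Z S" unfolding sc by (simp add: algebra_simps)
      have s56: "2 * s \<le> 3 * \<mu>Z S"
      proof -
        have "(5/6) * s \<le> (1-\<delta>) * s" using dl s0 by (intro mult_right_mono) auto
        then show ?thesis using mzl s0 by linarith
      qed
      have "real (card (BT S)) \<le> real (m choose l) * (2 * exp (-(\<delta>^2*\<mu>Z S/(4*d))))"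
        using chernoff_count[OF finY w2b d0 dl(1,2) lY mz[unfolded m_def]]
        by (simp only: BT_def TT_def m_def)
      also have "\<dots> \<le> real (m choose l) * (2 * \<epsilon>)"
        unfolding \<epsilon>_def g3 using exp_cmp[OF d0 s56, of "3*\<delta>"] by (simp add: mult_left_mono)
      finally show ?thesis using cardTT by simp
    qed
    have incl: "SS \<times> TT \<inter> Bad \<subseteq> (SS - G) \<times> TT \<union> (SIGMA S:G. BT S)"
    proof
      fix p assume p: "p \<in> SS \<times> TT \<inter> Bad"
      obtain S T where pST: "p = (S, T)" by (cases p)
      have S: "S \<in> SS" and T: "T \<in> TT" using p pST by auto
      show "p \<in> (SS - G) \<times> TT \<union> (SIGMA S:G. BT S)"
      proof (rule ccontr)
        assume "p \<notin> (SS - G) \<times> TT \<union> (SIGMA S:G. BT S)"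
        then have SG: "S \<in> G" and TB: "T \<notin> BT S" using S T pST by auto
        have SX: "S \<subseteq> X" and TY: "T \<subseteq> Y" using S T unfolding SS_def TT_def by auto
        have inG: "(1-\<delta>)*\<mu>A \<le> sum w1 S" "sum w1 S \<le> (1+\<delta>)*\<mu>A" using SG unfolding G_def by auto
        have "c * ((1-\<delta>)*\<mu>A) \<le> \<mu>Z S" "\<mu>Z S \<le> c * ((1+\<delta>)*\<mu>A)"
          unfolding \<mu>Z_def using inG c0 by (auto intro: mult_left_mono)
        then have mz: "(1-\<delta>) * s \<le> \<mu>Z S" "\<mu>Z S \<le> (1+\<delta>) * s" unfolding sc by (simp_all add: algebra_simps)
        have zz: "(1-\<delta>)*\<mu>Z S \<le> sum (w2 S) T" "sum (w2 S) T \<le> (1+\<delta>)*\<mu>Z S"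
          using TB T unfolding BT_def by auto
        have "(1 - 3*\<delta>) * s \<le> sum (w2 S) T \<and> sum (w2 S) T \<le> (1 + 3*\<delta>) * s"
          by (rule sandwich[OF dl(1) dl(3) s0 mz zz])
        then have "(S, T) \<notin> Bad" unfolding Bad_def g3 using Zsum[OF SX TY] by simp
        then show False using p pST by auto
      qed
    qed
    have finG: "finite G" unfolding G_def using finSS by auto
    have finBT: "\<And>S. finite (BT S)" unfolding BT_def using finTT by auto
    have cardG: "card G \<le> card SS" unfolding G_def using finSS by (intro card_mono) auto
    have "real (card (SS \<times> TT \<inter> Bad)) \<le> real (card ((SS - G) \<times> TT \<union> (SIGMA S:G. BT S)))"
      using incl finSS finTT finG finBT by (intro of_nat_mono card_mono) (auto intro!: finite_SigmaI)
    also have "\<dots> \<le> real (card ((SS - G) \<times> TT)) + real (card (SIGMA S:G. BT S))"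
      using card_Un_le[of "(SS - G) \<times> TT" "SIGMA S:G. BT S"] by (simp only: of_nat_add[symmetric] of_nat_le_iff)
    also have "\<dots> = real (card (SS - G)) * real (card TT) + (\<Sum>S\<in>G. real (card (BT S)))"
      using finG finTT unfolding BT_def by (simp add: card_cartesian_product)
    also have "\<dots> \<le> real (card SS) * (2 * \<epsilon>) * real (card TT) + (\<Sum>S\<in>G. real (card TT) * (2 * \<epsilon>))"
      using boundA boundT by (intro add_mono sum_mono mult_right_mono) auto
    also have "\<dots> = real (card SS) * (2 * \<epsilon>) * real (card TT) + real (card G) * real (card TT) * (2 * \<epsilon>)"
      by simp
    also have "\<dots> \<le> real (card SS) * (2 * \<epsilon>) * real (card TT) + real (card SS) * real (card TT) * (2 * \<epsilon>)"
      using cardG by (intro add_mono mult_right_mono) (auto simp: \<epsilon>_def)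
    also have "\<dots> = real (card SS) * real (card TT) * (4 * \<epsilon>)" by (simp add: algebra_simps)
    finally have cnt: "real (card (SS \<times> TT \<inter> Bad)) \<le> real (card SS) * real (card TT) * (4 * \<epsilon>)" .
    have pos: "0 < real (card SS) * real (card TT)" using finSS finTT SSne TTne by (simp add: card_gt_0_iff)
    show ?thesis unfolding prob using cnt pos by (simp add: divide_le_eq mult.commute)
  qed
  then show ?thesis unfolding Let_def Bad_def \<epsilon>_def d_def s_def n_def m_def .
qed

end
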